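(* For arbitrary probability distributions $P,Q$ on a common countable set with finite entropies, $$H\!\left(\frac{P+Q}{2}\right)-\frac{H(P)+H(Q)}{2}\ \ge\ d\!\left(\frac{1-d_{\mathrm{TV}}(P,Q)}{2}\,\Big\|\,\frac12\right),$$ and this lower bound is tight: for every $\varepsilon\in[0,1]$ there exist $P,Q$ with $d_{\mathrm{TV}}(P,Q)=\varepsilon$ attaining equality.
   Context: $H(P)=-\sum_x P(x)\log P(x)$ is the Shannon entropy; $d_{\mathrm{TV}}(P,Q)=\frac12\sum_x |P(x)-Q(x)|$; for $p,q\in[0,1]$, $d(p\|q)=p\log\frac pq+(1-p)\log\frac{1-p}{1-q}$ with $0\log0=0$. Logarithms are natural. *)

theory Defs
  imports "HOL-Probability.Probability"
begin

definition plogp :: "real \<Rightarrow> real" where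
  "plogp t = (if t = 0 then 0 else t * ln t)"

definition entropy :: "('a \<Rightarrow> real) \<Rightarrow> real" where
  "entropy p = - (\<Sum>\<^sub>\<infinity>x. plogp (p x))"

definition finite_entropy :: "('a \<Rightarrow> real) \<Rightarrow> bool" where
  "finite_entropy p \<longleftrightarrow> (\<lambda>x. plogp (p x)) summable_on UNIV"

definition tv_dist :: "'a pmf \<Rightarrow> 'a pmf \<Rightarrow> real" where
  "tv_dist P Q = (1/2) * (\<Sum>\<^sub>\<infinity>x. \<bar>pmf P x - pmf Q x\<bar>)"

definition bin_kl :: "real \<Rightarrow> real \<Rightarrow> real" where
  "bin_kl p q = (if p = 0 then 0 else p * ln (p / q))
              + (if 1 - p = 0 then 0 else (1 - p) * ln ((1 - p) / (1 - q)))"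

definition js_gap :: "'a pmf \<Rightarrow> 'a pmf \<Rightarrow> real" where
  "js_gap P Q = entropy (\<lambda>x. (pmf P x + pmf Q x) / 2)
                - (entropy (pmf P) + entropy (pmf Q)) / 2"

end

theory Submission
  imports Defs
begin

lemma plogp_pos: "t > 0 \<Longrightarrow> plogp t = t * ln t" by (simp add: plogp_def)

lemma pointwise_lower:
  fixes a b al be :: real
  assumes a: "a \<ge> 0" and b: "b \<ge> 0" and al: "al \<ge> 1/2" and be: "be \<ge> 0" and s: "al + be = 1"
    and z: "be = 0 \<Longrightarrow> min a b = 0"
  shows "(plogp a + plogp b)/2 - plogp ((a+b)/2) \<ge> max a b / 2 * ln (2*al) + min a b / 2 * ln (2*be)"
proof -
  have main: "(plogp a + plogp b)/2 - plogp ((a+b)/2) \<ge> a / 2 * ln (2*al) + b / 2 * ln (2*be)"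
    if a: "a \<ge> 0" and b: "b \<ge> 0" and ab: "a \<ge> b" and z: "be = 0 \<Longrightarrow> b = 0" for a b
  proof (cases "a = 0")
    case True then show ?thesis using ab b by (simp add: plogp_def)
  next
    case False
    hence ap: "a > 0" using a by simp
    have l2: "ln (2*al) \<le> ln 2" using al s be by (subst ln_le_cancel_iff) auto
    show ?thesis
    proof (cases "b = 0")
      case True
      have "plogp (a/2) = a/2 * (ln a - ln 2)" using ap by (simp add: plogp_def ln_div)
      hence "(plogp a + plogp b)/2 - plogp ((a+b)/2) = a/2 * ln 2"
        using True ap by (simp add: plogp_def algebra_simps)
      then show ?thesis using True l2 ap by (simp add: mult_left_mono)
    next
      case False
      hence bp: "b > 0" using b by simp
      hence bep: "be > 0" using z be by force
      have alp: "al > 0" using al by simp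
      define S where "S = a + b"
      have Sp: "S > 0" using ap bp S_def by simp
      have h1: "ln (S*al/a) \<le> S*al/a - 1" using Sp alp ap by (intro ln_le_minus_one) simp
      have h2: "ln (S*be/b) \<le> S*be/b - 1" using Sp bep bp by (intro ln_le_minus_one) simp
      have e1: "ln (S*al/a) = ln S + ln al - ln a" using Sp alp ap by (simp add: ln_div ln_mult)
      have e2: "ln (S*be/b) = ln S + ln be - ln b" using Sp bep bp by (simp add: ln_div ln_mult)
      have h1': "a * (ln S + ln al - ln a) \<le> S*al - a"
        using mult_left_mono[OF h1, of a] ap e1 by (simp add: algebra_simps)
      have h2': "b * (ln S + ln be - ln b) \<le> S*be - b"
        using mult_left_mono[OF h2, of b] bp e2 by (simp add: algebra_simps)
      have m: "plogp ((a+b)/2) = S/2 * (ln S - ln 2)" using Sp S_def by (simp add: plogp_def ln_div)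
      have "ln (2*al) = ln 2 + ln al" "ln (2*be) = ln 2 + ln be" using alp bep by (simp_all add: ln_mult)
      note lns = this
      have sum0: "S*al - a + (S*be - b) = 0" proof -
        have "S*al + S*be = S" using s by (metis distrib_left mult_1_right)
        then show ?thesis using S_def by linarith
      qed
      have key: "a * ln al + b * ln be + S * ln S \<le> a * ln a + b * ln b"
        using h1' h2' sum0 S_def by (simp add: algebra_simps)
      have "(plogp a + plogp b)/2 - plogp ((a+b)/2) = (a * ln a + b * ln b)/2 - S * ln S/2 + S * ln 2 / 2"
        using m ap bp by (simp add: plogp_pos algebra_simps)
      moreover have "a / 2 * ln (2*al) + b / 2 * ln (2*be) = (a * ln al + b * ln be)/2 + S * ln 2 / 2"
        using lns S_def by (simp add: algebra_simps add_divide_distrib)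
      ultimately show ?thesis using key by argo
    qed
  qed
  show ?thesis
  proof (cases "a \<ge> b")
    case True
    hence "max a b = a" "min a b = b" by auto
    then show ?thesis using main[of a b] a b z True by simp
  next
    case False
    hence "max a b = b" "min a b = a" by auto
    then show ?thesis using main[of b a] a b z False by (simp add: add.commute)
  qed
qed

lemma pointwise_upper:
  fixes a b :: real
  assumes a: "a \<ge> 0" and b: "b \<ge> 0"
  shows "plogp ((a+b)/2) \<ge> (plogp a + plogp b)/2 - (a+b)/2 * ln 2"
proof (cases "a + b = 0")
  case True then show ?thesis using a b by (simp add: plogp_def)
next
  case False
  hence S: "a + b > 0" using a b by simp
  have ha: "plogp a \<le> a * ln (a+b)"
    using a b S by (cases "a = 0") (auto simp: plogp_def intro!: mult_left_mono)
  have hb: "plogp b \<le> b * ln (a+b)"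
    using a b S by (cases "b = 0") (auto simp: plogp_def intro!: mult_left_mono)
  have "plogp ((a+b)/2) = (a+b)/2 * (ln (a+b) - ln 2)" using S by (simp add: plogp_def ln_div)
  then show ?thesis using ha hb by (simp add: algebra_simps)
qed

lemma plogp_nonpos: "0 \<le> t \<Longrightarrow> t \<le> 1 \<Longrightarrow> plogp t \<le> 0"
  by (auto simp: plogp_def mult_nonneg_nonpos)

lemma pmf_summable: "pmf p summable_on A"
proof -
  have "(\<lambda>x. norm (pmf p x)) summable_on A"
    using abs_summable_equivalent pmf_abs_summable by blast
  then show ?thesis by simp
qed

lemma pmf_infsum: "(\<Sum>\<^sub>\<infinity>x. pmf p x) = 1"
proof -
  have "infsetsum (pmf p) UNIV = infsum (pmf p) UNIV" by (rule infsetsum_infsum) auto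
  then show ?thesis using infsetsum_pmf_eq_1[of p UNIV] by simp
qed

lemma infsum_diff_real:
  fixes f g :: "'a \<Rightarrow> real"
  assumes "f summable_on A" "g summable_on A"
  shows "infsum (\<lambda>x. f x - g x) A = infsum f A - infsum g A"
proof -
  have "g' summable_on A" if "g' = (\<lambda>x. - g x)" for g' using assms that summable_on_uminus by blast
  then have "infsum (\<lambda>x. f x + - g x) A = infsum f A + infsum (\<lambda>x. - g x) A"
    using assms by (intro infsum_add) auto
  then show ?thesis by (simp add: infsum_uminus)
qed

lemma summable_diff_real:
  fixes f g :: "'a \<Rightarrow> real"
  assumes "f summable_on A" "g summable_on A"
  shows "(\<lambda>x. f x - g x) summable_on A"
proof -
  have "(\<lambda>x. - g x) summable_on A" using assms summable_on_uminus by blast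
  then have "(\<lambda>x. f x + - g x) summable_on A" using assms by (intro summable_on_add) auto
  then show ?thesis by simp
qed

lemma summable_abs_real:
  fixes f :: "'a \<Rightarrow> real"
  assumes "f summable_on A" shows "(\<lambda>x. \<bar>f x\<bar>) summable_on A"
  using assms summable_on_iff_abs_summable_on_real by auto

lemma summable_divide_real:
  fixes f :: "'a \<Rightarrow> real"
  assumes "f summable_on A" shows "(\<lambda>x. f x / c) summable_on A"
  using summable_on_cmult_left[OF assms, of "inverse c"] by (simp add: divide_inverse)

lemma infsum_divide_real:
  fixes f :: "'a \<Rightarrow> real"
  assumes "f summable_on A" shows "infsum (\<lambda>x. f x / c) A = infsum f A / c"
  using infsum_cmult_left[of "inverse c" f A] assms by (simp add: divide_inverse)

lemma part1:
  fixes P Q :: "'a::countable pmf"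
  assumes fP: "finite_entropy (pmf P)" and fQ: "finite_entropy (pmf Q)"
  shows "js_gap P Q \<ge> bin_kl ((1 - tv_dist P Q) / 2) (1/2)"
proof -
  define a where "a = pmf P"
  define b where "b = pmf Q"
  define \<delta> where "\<delta> = tv_dist P Q"
  define al where "al = (1 + \<delta>)/2"
  define be where "be = (1 - \<delta>)/2"
  have a0: "a x \<ge> 0" "a x \<le> 1" and b0: "b x \<ge> 0" "b x \<le> 1" for x
    by (auto simp: a_def b_def pmf_le_1)
  have sa: "a summable_on UNIV" and sb: "b summable_on UNIV" unfolding a_def b_def by (rule pmf_summable)+
  have ia: "(\<Sum>\<^sub>\<infinity>x. a x) = 1" and ib: "(\<Sum>\<^sub>\<infinity>x. b x) = 1" unfolding a_def b_def by (rule pmf_infsum)+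
  have sd: "(\<lambda>x. \<bar>a x - b x\<bar>) summable_on UNIV"
    by (intro summable_abs_real summable_diff_real sa sb)
  have id: "(\<Sum>\<^sub>\<infinity>x. \<bar>a x - b x\<bar>) = 2 * \<delta>" by (simp add: \<delta>_def tv_dist_def a_def b_def)
  have d0: "\<delta> \<ge> 0" using id infsum_nonneg[of UNIV "\<lambda>x. \<bar>a x - b x\<bar>"] by simp
  have sab: "(\<lambda>x. a x + b x) summable_on UNIV" by (intro summable_on_add sa sb)
  have iab: "(\<Sum>\<^sub>\<infinity>x. a x + b x) = 2" using infsum_add[OF sa sb] ia ib by simp
  have maxe: "max (a x) (b x) = ((a x + b x) + \<bar>a x - b x\<bar>) / 2" for x by (simp add: max_def)
  have mine: "min (a x) (b x) = ((a x + b x) - \<bar>a x - b x\<bar>) / 2" for x by (simp add: min_def)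
  have smax: "(\<lambda>x. max (a x) (b x)) summable_on UNIV"
    unfolding maxe by (intro summable_divide_real summable_on_add sab sd)
  have smin: "(\<lambda>x. min (a x) (b x)) summable_on UNIV"
    unfolding mine by (intro summable_divide_real summable_diff_real sab sd)
  have imax: "(\<Sum>\<^sub>\<infinity>x. max (a x) (b x)) = 2 * al"
    unfolding maxe using infsum_divide_real[OF summable_on_add[OF sab sd]] infsum_add[OF sab sd] iab id al_def
    by simp
  have imin: "(\<Sum>\<^sub>\<infinity>x. min (a x) (b x)) = 2 * be"
    unfolding mine using infsum_divide_real[OF summable_diff_real[OF sab sd]] infsum_diff_real[OF sab sd] iab id be_def
    by simp
  have be0: "be \<ge> 0" using imin infsum_nonneg[of UNIV "\<lambda>x. min (a x) (b x)"] a0 b0 by simp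
  have al1: "al \<ge> 1/2" using d0 al_def by simp
  have albe: "al + be = 1" using al_def be_def by simp
  have zer: "min (a x) (b x) = 0" if "be = 0" for x
  proof -
    have "sum (\<lambda>x. min (a x) (b x)) {x} \<le> (\<Sum>\<^sub>\<infinity>x. min (a x) (b x))"
      by (rule finite_sum_le_infsum[OF smin]) (auto simp: a0 b0)
    then show ?thesis using imin that a0[of x] b0[of x] by simp
  qed
  define G where "G x = (plogp (a x) + plogp (b x))/2 - plogp ((a x + b x)/2)" for x
  define R where "R x = max (a x) (b x) / 2 * ln (2*al) + min (a x) (b x) / 2 * ln (2*be)" for x
  have sPa: "(\<lambda>x. plogp (a x)) summable_on UNIV" using fP by (simp add: finite_entropy_def a_def)
  have sPb: "(\<lambda>x. plogp (b x)) summable_on UNIV" using fQ by (simp add: finite_entropy_def b_def)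
  have sM: "(\<lambda>x. plogp ((a x + b x)/2)) summable_on UNIV"
  proof -
    define B where "B x = \<bar>plogp (a x)\<bar>/2 + \<bar>plogp (b x)\<bar>/2 + (a x + b x)/2 * ln 2" for x
    have sB: "B summable_on UNIV" unfolding B_def
      by (intro summable_on_add summable_divide_real summable_abs_real sPa sPb summable_on_cmult_left sab)
    have "(\<lambda>x. \<bar>plogp ((a x + b x)/2)\<bar>) summable_on UNIV"
    proof (rule summable_on_comparison_test[OF sB])
      fix x
      have "plogp ((a x + b x)/2) \<le> 0" using a0[of x] b0[of x] by (intro plogp_nonpos) auto
      moreover have "plogp (a x) \<le> 0" "plogp (b x) \<le> 0" using a0[of x] b0[of x] by (auto intro: plogp_nonpos)
      moreover note pointwise_upper[OF a0(1)[of x] b0(1)[of x]]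
      ultimately show "\<bar>plogp ((a x + b x)/2)\<bar> \<le> B x" unfolding B_def
        by (simp only: abs_of_nonpos) argo
    qed simp
    then show ?thesis using summable_on_iff_abs_summable_on_real by auto
  qed
  have sG: "G summable_on UNIV" unfolding G_def
    by (intro summable_diff_real summable_divide_real summable_on_add sPa sPb sM)
  have sR: "R summable_on UNIV" unfolding R_def
    by (intro summable_on_add summable_on_cmult_left summable_divide_real smax smin)
  have jsG: "js_gap P Q = infsum G UNIV"
  proof -
    have "infsum G UNIV = ((\<Sum>\<^sub>\<infinity>x. plogp (a x)) + (\<Sum>\<^sub>\<infinity>x. plogp (b x)))/2 - (\<Sum>\<^sub>\<infinity>x. plogp ((a x + b x)/2))"
      unfolding G_def
      by (simp add: infsum_diff_real summable_divide_real summable_on_add sPa sPb sM infsum_divide_real infsum_add)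
    then show ?thesis by (simp add: js_gap_def entropy_def a_def b_def field_simps)
  qed
  have iR: "infsum R UNIV = al * ln (2*al) + be * ln (2*be)"
  proof -
    have "infsum R UNIV = (\<Sum>\<^sub>\<infinity>x. max (a x) (b x) / 2 * ln (2*al)) + (\<Sum>\<^sub>\<infinity>x. min (a x) (b x) / 2 * ln (2*be))"
      unfolding R_def by (intro infsum_add summable_on_cmult_left summable_divide_real smax smin)
    also have "\<dots> = (\<Sum>\<^sub>\<infinity>x. max (a x) (b x)) / 2 * ln (2*al) + (\<Sum>\<^sub>\<infinity>x. min (a x) (b x)) / 2 * ln (2*be)"
    proof -
      have "(\<Sum>\<^sub>\<infinity>x. max (a x) (b x) / 2 * ln (2*al)) = (\<Sum>\<^sub>\<infinity>x. max (a x) (b x) / 2) * ln (2*al)"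
        by (rule infsum_cmult_left) (intro summable_divide_real smax)
      moreover have "(\<Sum>\<^sub>\<infinity>x. min (a x) (b x) / 2 * ln (2*be)) = (\<Sum>\<^sub>\<infinity>x. min (a x) (b x) / 2) * ln (2*be)"
        by (rule infsum_cmult_left) (intro summable_divide_real smin)
      ultimately show ?thesis using infsum_divide_real[OF smax, of 2] infsum_divide_real[OF smin, of 2] by simp
    qed
    finally show ?thesis using imax imin by simp
  qed
  have "infsum R UNIV \<le> infsum G UNIV"
    by (rule infsum_mono[OF sR sG]) (unfold R_def G_def, intro pointwise_lower a0 b0 al1 be0 albe zer, assumption)
  moreover have "bin_kl ((1 - tv_dist P Q) / 2) (1/2) = al * ln (2*al) + be * ln (2*be)"
  proof -
    have e1: "(1 - tv_dist P Q)/2 = be" by (simp add: be_def \<delta>_def)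
    have e2: "1 - be = al" using albe by simp
    have e3: "x / (1/2) = 2 * x" for x :: real by simp
    show ?thesis unfolding bin_kl_def e1 e2 e3 using al1 by auto
  qed
  ultimately show ?thesis using jsG iR by simp
qed

lemma nat01_summable:
  fixes f :: "nat \<Rightarrow> real"
  assumes "\<And>x. x \<noteq> 0 \<Longrightarrow> x \<noteq> 1 \<Longrightarrow> f x = 0"
  shows "f summable_on UNIV" "infsum f UNIV = f 0 + f 1"
proof -
  have "f summable_on UNIV \<longleftrightarrow> f summable_on {0,1}"
    by (rule summable_on_cong_neutral) (use assms in auto)
  then show "f summable_on UNIV" by simp
  have "infsum f UNIV = infsum f {0,1}"
    by (rule infsum_cong_neutral) (use assms in auto)
  then show "infsum f UNIV = f 0 + f 1" by simp
qed

lemma part2: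
  fixes \<epsilon> :: real
  assumes e: "0 \<le> \<epsilon>" "\<epsilon> \<le> 1"
  shows "\<exists>P Q :: nat pmf. finite_entropy (pmf P) \<and> finite_entropy (pmf Q) \<and>
               tv_dist P Q = \<epsilon> \<and>
               js_gap P Q = bin_kl ((1 - tv_dist P Q) / 2) (1/2)"
proof -
  define al where "al = (1 + \<epsilon>)/2"
  define be where "be = (1 - \<epsilon>)/2"
  have al1: "al \<ge> 1/2" "al \<le> 1" and be0: "be \<ge> 0" and albe: "al + be = 1"
    using e by (auto simp: al_def be_def field_simps)
  define P :: "nat pmf" where "P = pmf_of_list [(0, al), (1, be)]"
  define Q :: "nat pmf" where "Q = pmf_of_list [(0, be), (1, al)]"
  have wP: "pmf_of_list_wf [(0::nat, al), (1, be)]" using al1 be0 albe by (intro pmf_of_list_wfI) auto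
  have wQ: "pmf_of_list_wf [(0::nat, be), (1, al)]" using al1 be0 albe by (intro pmf_of_list_wfI) auto
  have pP: "pmf P x = (if x = 0 then al else if x = 1 then be else 0)" for x
    unfolding P_def using pmf_pmf_of_list[OF wP, of x] by auto
  have pQ: "pmf Q x = (if x = 0 then be else if x = 1 then al else 0)" for x
    unfolding Q_def using pmf_pmf_of_list[OF wQ, of x] by auto
  have fP: "finite_entropy (pmf P)" unfolding finite_entropy_def
    by (rule nat01_summable) (simp add: pP plogp_def)
  have fQ: "finite_entropy (pmf Q)" unfolding finite_entropy_def
    by (rule nat01_summable) (simp add: pQ plogp_def)
  have tv: "tv_dist P Q = \<epsilon>"
  proof -
    have "(\<Sum>\<^sub>\<infinity>x. \<bar>pmf P x - pmf Q x\<bar>) = \<bar>al - be\<bar> + \<bar>be - al\<bar>"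
      by (subst nat01_summable(2)) (auto simp: pP pQ)
    then show ?thesis unfolding tv_dist_def using e by (simp add: al_def be_def)
  qed
  have hP: "entropy (pmf P) = - (plogp al + plogp be)" unfolding entropy_def
    by (subst nat01_summable(2)) (auto simp: pP plogp_def)
  have hQ: "entropy (pmf Q) = - (plogp be + plogp al)" unfolding entropy_def
    by (subst nat01_summable(2)) (auto simp: pQ plogp_def)
  have hM: "entropy (\<lambda>x. (pmf P x + pmf Q x)/2) = - (2 * plogp (1/2))" unfolding entropy_def
    by (subst nat01_summable(2)) (auto simp: pP pQ plogp_def albe add.commute)
  have p12: "plogp (1/2) = - ln 2 / 2" by (simp add: plogp_def ln_div)
  have js: "js_gap P Q = ln 2 + plogp al + plogp be"
    unfolding js_gap_def hP hQ hM p12 by (simp add: field_simps)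
  have bk: "bin_kl ((1 - tv_dist P Q) / 2) (1/2) = al * ln (2*al) + be * ln (2*be)"
  proof -
    have e1: "(1 - tv_dist P Q)/2 = be" by (simp add: be_def tv)
    have e2: "1 - be = al" using albe by simp
    have e3: "x / (1/2) = 2 * x" for x :: real by simp
    show ?thesis unfolding bin_kl_def e1 e2 e3 using al1 by auto
  qed
  have "js_gap P Q = bin_kl ((1 - tv_dist P Q) / 2) (1/2)"
  proof (cases "be = 0")
    case True
    then have "al = 1" using albe by simp
    then show ?thesis unfolding js bk using True by (simp add: plogp_def)
  next
    case False
    then have "be > 0" "al > 0" using be0 al1 by auto
    then have l: "ln (2*al) = ln 2 + ln al" "ln (2*be) = ln 2 + ln be" "plogp al = al * ln al" "plogp be = be * ln be"
      by (auto simp: ln_mult plogp_def)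
    have "al * ln 2 + be * ln 2 = ln 2" using albe by (metis distrib_right mult_1)
    then show ?thesis unfolding js bk l by (simp add: distrib_left)
  qed
  then show ?thesis using fP fQ tv by blast
qed


theorem corollary2:
  shows "(\<forall>P Q :: ('a::countable) pmf.
            finite_entropy (pmf P) \<and> finite_entropy (pmf Q) \<longrightarrow>
            js_gap P Q \<ge> bin_kl ((1 - tv_dist P Q) / 2) (1/2))
       \<and> (\<forall>\<epsilon>::real. 0 \<le> \<epsilon> \<and> \<epsilon> \<le> 1 \<longrightarrow>
            (\<exists>P Q :: nat pmf. finite_entropy (pmf P) \<and> finite_entropy (pmf Q) \<and>
               tv_dist P Q = \<epsilon> \<and>
               js_gap P Q = bin_kl ((1 - tv_dist P Q) / 2) (1/2)))"
  using part1 part2 by blast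

end
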